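(* Let $H$ be a connected graph with $n\ge2$ vertices, let $v$ be a vertex of $H$ such that every vertex of $H$ is within distance $d$ of $v$, where $d\ge2$ is an integer, and suppose each vertex of $H$ independently receives a geometrically distributed number of pebbles with parameter $(1+\alpha)^{-1}$, where $\alpha\in\mathbb R_{>0}$. Writing $k:=\lceil n^{1/d}-1\rceil$, the probability that $v$ is unpebblable is at most $$\left(\frac{e\,(2^{d-1}+k-1)}{k\,(1+\Phi(\alpha))}\right)^{k}.$$
   Context: Pebbling: a distribution on a graph assigns a nonnegative integer number of pebbles to each vertex. A pebbling move removes two pebbles from a vertex having at least two pebbles and adds one pebble to an adjacent vertex. A vertex is pebblable if some sequence of pebbling moves from the distribution ends with at least one pebble on it, and unpebblable otherwise. A geometric random variable with parameter $p$ takes value $k\in\{0,1,2,\dots\}$ with probability $p(1-p)^k$. $\Phi:\mathbb R_{\ge0}\to\mathbb R_{\ge0}$ is defined by $\Phi(\alpha):=\alpha^2/(2\alpha+1)$. *)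

theory Defs
  imports "HOL-Probability.Probability"
begin

definition simple_graph :: "'a set \<Rightarrow> ('a \<Rightarrow> 'a \<Rightarrow> bool) \<Rightarrow> bool" where
  "simple_graph V E \<longleftrightarrow> finite V \<and> (\<forall>x y. E x y \<longrightarrow> x \<in> V \<and> y \<in> V)
     \<and> (\<forall>x y. E x y \<longrightarrow> E y x) \<and> (\<forall>x. \<not> E x x)"

definition connected_graph :: "'a set \<Rightarrow> ('a \<Rightarrow> 'a \<Rightarrow> bool) \<Rightarrow> bool" where
  "connected_graph V E \<longleftrightarrow> V \<noteq> {} \<and> (\<forall>x\<in>V. \<forall>y\<in>V. E\<^sup>*\<^sup>* x y)"

definition within_dist :: "('a \<Rightarrow> 'a \<Rightarrow> bool) \<Rightarrow> 'a \<Rightarrow> nat \<Rightarrow> 'a \<Rightarrow> bool" where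
  "within_dist E v d u \<longleftrightarrow> (\<exists>m\<le>d. (E ^^ m) v u)"

definition pebbling_move :: "('a \<Rightarrow> 'a \<Rightarrow> bool) \<Rightarrow> ('a \<Rightarrow> nat) \<Rightarrow> ('a \<Rightarrow> nat) \<Rightarrow> bool" where
  "pebbling_move E D D' \<longleftrightarrow> (\<exists>x y. E x y \<and> D x \<ge> 2 \<and>
       D' = (D(x := D x - 2))(y := D y + 1))"

definition pebblable :: "('a \<Rightarrow> 'a \<Rightarrow> bool) \<Rightarrow> ('a \<Rightarrow> nat) \<Rightarrow> 'a \<Rightarrow> bool" where
  "pebblable E D v \<longleftrightarrow> (\<exists>D'. (pebbling_move E)\<^sup>*\<^sup>* D D' \<and> D' v \<ge> 1)"

definition Phi :: "real \<Rightarrow> real" where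
  "Phi \<alpha> = \<alpha>\<^sup>2 / (2 * \<alpha> + 1)"

end

theory Submission
  imports Defs
begin

lemma moves_many:
  assumes "E x y" "x \<noteq> y" "2 * t \<le> D x"
  shows "(pebbling_move E)\<^sup>*\<^sup>* D (D(x := D x - 2 * t, y := D y + t))"
  using assms(3)
proof (induction t)
  case 0
  then show ?case by simp
next
  case (Suc t)
  let ?D1 = "D(x := D x - 2 * t, y := D y + t)"
  have IH: "(pebbling_move E)\<^sup>*\<^sup>* D ?D1" by (rule Suc.IH) (use Suc.prems in simp)
  have "pebbling_move E ?D1 ((?D1(x := ?D1 x - 2))(y := ?D1 y + 1))"
    unfolding pebbling_move_def using assms Suc.prems by (intro exI[of _ x] exI[of _ y]) auto
  moreover have "(?D1(x := ?D1 x - 2))(y := ?D1 y + 1) = D(x := D x - 2 * Suc t, y := D y + Suc t)"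
    using assms by (auto simp: fun_eq_iff)
  ultimately show ?case using IH by (metis rtranclp.rtrancl_into_rtrancl)
qed

lemma path_pebble:
  assumes irr: "\<forall>x. \<not> E x x"
  shows "(E ^^ m) x u \<Longrightarrow> D x \<ge> 2 ^ m \<Longrightarrow> pebblable E D u"
proof (induction m arbitrary: x D)
  case 0
  then show ?case unfolding pebblable_def by auto
next
  case (Suc m)
  from Suc.prems(1) obtain y where xy: "E x y" and yu: "(E ^^ m) y u" by (rule relpowp_Suc_E2)
  have ne: "x \<noteq> y" using xy irr by auto
  let ?D1 = "D(x := D x - 2 * 2^m, y := D y + 2^m)"
  have 1: "(pebbling_move E)\<^sup>*\<^sup>* D ?D1"
    using moves_many[where E=E and x=x and y=y and t="2^m" and D=D, OF xy ne] Suc.prems(2) by simp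
  have "?D1 y \<ge> 2 ^ m" using ne by simp
  then have "pebblable E ?D1 u" using Suc.IH yu by blast
  then show ?case using 1 unfolding pebblable_def by (meson rtranclp_trans)
qed

lemma gather:
  assumes "finite C"
  shows "\<forall>c\<in>C. E c w \<Longrightarrow> w \<notin> C \<Longrightarrow>
    \<exists>D'. (pebbling_move E)\<^sup>*\<^sup>* D D' \<and> D' w \<ge> D w + (\<Sum>c\<in>C. D c div 2)"
  using assms
proof (induction C arbitrary: D rule: finite_induct)
  case empty
  then show ?case by auto
next
  case (insert c C)
  have cw: "E c w" "c \<noteq> w" using insert.prems by auto
  let ?t = "D c div 2"
  let ?D1 = "D(c := D c - 2 * ?t, w := D w + ?t)"
  have 1: "(pebbling_move E)\<^sup>*\<^sup>* D ?D1" by (rule moves_many[where E=E and x=c and y=w, OF cw]) simp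
  obtain D' where 2: "(pebbling_move E)\<^sup>*\<^sup>* ?D1 D'" and
     3: "D' w \<ge> ?D1 w + (\<Sum>c\<in>C. ?D1 c div 2)"
    using insert.IH[of ?D1] insert.prems by blast
  have "(\<Sum>c\<in>C. ?D1 c div 2) = (\<Sum>c\<in>C. D c div 2)"
    using insert.hyps insert.prems by (intro sum.cong) auto
  then have "D' w \<ge> D w + (\<Sum>c\<in>insert c C. D c div 2)"
    using 3 cw insert.hyps by simp
  then show ?case using 1 2 by (meson rtranclp_trans)
qed

lemma relpowp_sym:
  assumes sym: "\<forall>x y. E x y \<longrightarrow> E y x"
  shows "(E ^^ m) a b \<Longrightarrow> (E ^^ m) b a"
proof (induction m arbitrary: a b)
  case 0
  then show ?case by simp
next
  case (Suc m)
  from Suc.prems obtain y where "(E ^^ m) a y" "E y b" by (rule relpowp_Suc_E)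
  then show ?case using Suc.IH sym by (meson relpowp_Suc_I2)
qed

lemma geom_div2:
  fixes p z :: real
  assumes p: "0 < p" "p \<le> 1" and z: "0 \<le> z" "z \<le> 1"
  shows "measure_pmf.expectation (geometric_pmf p) (\<lambda>n. z ^ (n div 2))
          = (1 - (1-p)^2) / (1 - (1-p)^2 * z)"
proof -
  define q where "q = 1 - p"
  have q: "0 \<le> q" "q < 1" using p by (auto simp: q_def)
  define h where "h n = q ^ n * p * z ^ (n div 2)" for n
  have e: "measure_pmf.expectation (geometric_pmf p) (\<lambda>n. z ^ (n div 2)) =
        (\<integral>n. pmf (geometric_pmf p) n * z ^ (n div 2) \<partial>count_space UNIV)"
    unfolding measure_pmf_eq_density by (subst integral_density) auto
  have hh: "(\<lambda>n. pmf (geometric_pmf p) n * z ^ (n div 2)) = h"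
    using p by (auto simp: h_def q_def fun_eq_iff)
  have sg: "summable (\<lambda>n. q ^ n * p)"
    using q by (intro summable_mult2 summable_geometric) auto
  have hn: "norm (h n) \<le> q ^ n * p" for n
  proof -
    have "z ^ (n div 2) \<le> 1" using z by (simp add: power_le_one)
    then have "q ^ n * p * z ^ (n div 2) \<le> q ^ n * p * 1"
      using q p by (intro mult_left_mono) auto
    then show ?thesis using q p z by (simp add: h_def)
  qed
  have sh: "summable h"
    using summable_comparison_test'[OF sg, of 0 h] hn by auto
  have sumn: "summable (\<lambda>n. norm (h n))"
    using summable_comparison_test'[OF sg, of 0 "\<lambda>n. norm (h n)"] hn by auto
  have grp: "(\<lambda>m. sum h {m*2..<m*2+2}) sums (suminf h)"
    using sums_group[OF summable_sums[OF sh], of 2] by simp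
  have blk: "sum h {m*2..<m*2+2} = p * (1 + q) * (q^2 * z) ^ m" for m
  proof -
    have "sum h {m*2..<m*2+2} = h (m*2) + h (m*2+1)"
      by (simp add: numeral_2_eq_2)
    also have "\<dots> = p * (1 + q) * (q^2 * z) ^ m"
      using power_mult[of q m 2] power_mult[of q 2 m]
      by (simp add: h_def power_mult_distrib algebra_simps)
    finally show ?thesis .
  qed
  have qz: "q^2 * z < 1"
  proof -
    have "q^2 * z \<le> q^2 * 1" using q z by (intro mult_left_mono) auto
    moreover have "q^2 < 1" using q by (simp add: power_less_one_iff abs_square_less_1)
    ultimately show ?thesis by simp
  qed
  have "(\<lambda>m. (q^2 * z) ^ m) sums (1 / (1 - q^2 * z))"
    using q z qz by (intro geometric_sums) auto
  then have "(\<lambda>m. p * (1 + q) * (q^2 * z) ^ m) sums (p * (1 + q) * (1 / (1 - q^2 * z)))"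
    by (rule sums_mult)
  then have "suminf h = p * (1 + q) * (1 / (1 - q^2 * z))"
    using grp blk by (simp add: sums_unique2)
  moreover have "integrable (count_space UNIV) h"
    using sumn by (simp add: integrable_count_space_nat_iff)
  ultimately have "(\<integral>n. h n \<partial>count_space UNIV) = p * (1 + q) * (1 / (1 - q^2 * z))"
    by (simp add: integral_count_space_nat)
  moreover have "p * (1 + q) = 1 - (1-p)^2" by (simp add: q_def power2_eq_square algebra_simps)
  ultimately show ?thesis using e hh by (simp add: q_def)
qed

lemma ball_card:
  assumes sg: "simple_graph V E" and v: "v \<in> V"
    and deg: "\<forall>x. within_dist E v j x \<longrightarrow> card {y. E x y} < k"
  shows "i \<le> Suc j \<Longrightarrow> finite {u. within_dist E v i u} \<and> card {u. within_dist E v i u} \<le> k ^ i"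
proof (induction i)
  case 0
  have "{u. within_dist E v 0 u} = {v}" by (auto simp: within_dist_def)
  then show ?case by simp
next
  case (Suc i)
  let ?B = "\<lambda>i. {u. within_dist E v i u}"
  have fin: "finite V" using sg by (simp add: simple_graph_def)
  have NV: "{y. E x y} \<subseteq> V" for x using sg by (auto simp: simple_graph_def)
  have sub: "?B (Suc i) \<subseteq> (\<Union>x\<in>?B i. insert x {y. E x y})"
  proof
    fix u assume "u \<in> ?B (Suc i)"
    then obtain m where m: "m \<le> Suc i" "(E ^^ m) v u" by (auto simp: within_dist_def)
    show "u \<in> (\<Union>x\<in>?B i. insert x {y. E x y})"
    proof (cases "m \<le> i")
      case True
      then have "u \<in> ?B i" using m by (auto simp: within_dist_def)
      then show ?thesis by blast
    next
      case False
      then have "m = Suc i" using m by simp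
      with m obtain y where "(E ^^ i) v y" "E y u" by (metis relpowp_Suc_E)
      then have "y \<in> ?B i" by (auto simp: within_dist_def)
      then show ?thesis using \<open>E y u\<close> by blast
    qed
  qed
  have IH: "finite (?B i)" "card (?B i) \<le> k ^ i" using Suc by auto
  have Bj: "x \<in> ?B i \<Longrightarrow> within_dist E v j x" for x
  proof -
    assume "x \<in> ?B i"
    then obtain m where "m \<le> i" "(E ^^ m) v x" by (auto simp: within_dist_def)
    moreover have "i \<le> j" using Suc.prems by simp
    ultimately show ?thesis unfolding within_dist_def by (intro exI[of _ m]) simp
  qed
  have finU: "finite (\<Union>x\<in>?B i. insert x {y. E x y})"
    using IH(1) NV fin by (auto intro: finite_subset)
  have "card (?B (Suc i)) \<le> card (\<Union>x\<in>?B i. insert x {y. E x y})"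
    by (rule card_mono[OF finU sub])
  also have "\<dots> \<le> (\<Sum>x\<in>?B i. card (insert x {y. E x y}))"
    by (rule card_UN_le[OF IH(1)])
  also have "\<dots> \<le> (\<Sum>x\<in>?B i. k)"
  proof (rule sum_mono)
    fix x assume "x \<in> ?B i"
    have "card (insert x {y. E x y}) \<le> Suc (card {y. E x y})"
      using finite_subset[OF NV fin] by (simp add: card_insert_if)
    then show "card (insert x {y. E x y}) \<le> k" using deg Bj[OF \<open>x \<in> ?B i\<close>] by fastforce
  qed
  also have "\<dots> = card (?B i) * k" by simp
  also have "\<dots> \<le> k ^ i * k" using IH by simp
  finally show ?case using finite_subset[OF sub finU] by (simp add: mult.commute)
qed


theorem lemma24:
  fixes V :: "'a set" and E :: "'a \<Rightarrow> 'a \<Rightarrow> bool" and v :: 'a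
    and d :: nat and \<alpha> :: real
  assumes "simple_graph V E" and "connected_graph V E"
    and "card V \<ge> 2"
    and "v \<in> V" and "d \<ge> 2"
    and "\<forall>u\<in>V. within_dist E v d u"
    and "\<alpha> > 0"
  shows "let n = card V; k = nat \<lceil>real n powr (1 / real d) - 1\<rceil> in
    measure_pmf.prob (Pi_pmf V 0 (\<lambda>_. geometric_pmf (1 / (1 + \<alpha>))))
      {D. \<not> pebblable E D v}
    \<le> (exp 1 * (2 ^ (d - 1) + real k - 1) / (real k * (1 + Phi \<alpha>))) ^ k"
proof -
  note sg = assms(1) and vV = assms(4) and dge = assms(5) and cov = assms(6) and apos = assms(7)
  define n where "n = card V"
  define y where "y = real n powr (1 / real d) - 1"
  define k where "k = nat \<lceil>y\<rceil>"
  have fin: "finite V" using sg by (simp add: simple_graph_def)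
  have irr: "\<forall>x. \<not> E x x" and sym: "\<forall>x y. E x y \<longrightarrow> E y x"
    and sup: "\<forall>x y. E x y \<longrightarrow> x \<in> V \<and> y \<in> V"
    using sg by (auto simp: simple_graph_def)
  have n2: "real n \<ge> 2" using assms(3) by (simp add: n_def)
  have gt1: "1 < real n powr (1 / real d)"
    using n2 dge by (intro gr_one_powr) auto
  have ypos: "y > 0" using gt1 by (simp add: y_def)
  have cy: "of_int \<lceil>y\<rceil> - 1 < y" "y \<le> of_int \<lceil>y\<rceil>" using ceiling_correct[of y] by auto
  have kk: "real k = of_int \<lceil>y\<rceil>" using cy ypos by (simp add: k_def)
  have k1: "k \<ge> 1" using cy ypos kk by linarith
  have klt: "real k < real n powr (1 / real d)" using cy kk by (simp add: y_def)
  have "real k ^ d < (real n powr (1 / real d)) ^ d"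
    using klt dge by (intro power_strict_mono) auto
  also have "\<dots> = real n" using n2 dge by (simp add: powr_power)
  finally have kd: "k ^ d < n" by (metis of_nat_less_iff of_nat_power)
  obtain w where w: "within_dist E v (d - 1) w" and degw: "card {y. E w y} \<ge> k"
  proof (rule ccontr)
    assume "\<not> thesis"
    then have deg: "\<forall>x. within_dist E v (d - 1) x \<longrightarrow> card {y. E x y} < k"
      using that by (meson not_le)
    have "card {u. within_dist E v d u} \<le> k ^ d"
      using ball_card[OF sg vV deg, of d] dge by simp
    moreover have "finite {u. within_dist E v d u}"
      using ball_card[OF sg vV deg, of d] dge by simp
    moreover have "V \<subseteq> {u. within_dist E v d u}" using cov by auto
    ultimately have "card V \<le> k ^ d" by (meson card_mono le_trans)
    then show False using kd by (simp add: n_def)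
  qed
  have finN: "finite {y. E w y}" using sup fin by (auto intro: finite_subset)
  obtain C where CN: "C \<subseteq> {y. E w y}" and cardC: "card C = k" and finC: "finite C"
    using obtain_subset_with_card_n[OF degw] by blast
  obtain m where m: "m \<le> d - 1" "(E ^^ m) v w" using w by (auto simp: within_dist_def)
  have wv: "(E ^^ m) w v" using relpowp_sym[OF sym m(2)] .
  have CV: "C \<subseteq> V" using CN sup by auto
  have wC: "w \<notin> C" using CN irr by auto
  have Cw: "\<forall>c\<in>C. E c w" using CN sym by auto
  define L where "L = (2::nat) ^ (d - 1) - 1"
  have "(2::nat) ^ 1 \<le> 2 ^ (d - 1)" using dge by (intro power_increasing) auto
  then have L1: "L \<ge> 1" by (simp add: L_def)
  define S where "S D = (\<Sum>c\<in>C. D c div 2)" for D :: "'a \<Rightarrow> nat"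
  have key: "{D. \<not> pebblable E D v} \<subseteq> {D. S D \<le> L}"
  proof
    fix D assume "D \<in> {D. \<not> pebblable E D v}"
    then have np: "\<not> pebblable E D v" by simp
    show "D \<in> {D. S D \<le> L}"
    proof (rule ccontr)
      assume "D \<notin> {D. S D \<le> L}"
      then have "S D \<ge> 2 ^ (d - 1)" by (simp add: L_def)
      moreover have "(2::nat) ^ m \<le> 2 ^ (d - 1)" using m(1) by (intro power_increasing) auto
      ultimately have big: "S D \<ge> 2 ^ m" by linarith
      obtain D' where D': "(pebbling_move E)\<^sup>*\<^sup>* D D'" "D' w \<ge> D w + S D"
        using gather[where E=E and w=w and D=D, OF finC Cw wC] by (auto simp: S_def)
      have "pebblable E D' v" using path_pebble[OF irr wv] D'(2) big by simp
      then have "pebblable E D v" using D'(1) unfolding pebblable_def by (meson rtranclp_trans)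
      then show False using np by simp
    qed
  qed

  define p where "p = 1 / (1 + \<alpha>)"
  define P where "P = Pi_pmf V 0 (\<lambda>_. geometric_pmf p)"
  define Lr where "Lr = real L"
  define K where "K = real k"
  define z where "z = Lr / (Lr + K)"
  have Lrpos: "Lr \<ge> 1" using L1 by (simp add: Lr_def)
  have Kpos: "K \<ge> 1" using k1 by (simp add: K_def)
  have z01: "0 < z" "z < 1" using Lrpos Kpos by (auto simp: z_def field_simps)
  have p01: "0 < p" "p \<le> 1" using apos by (auto simp: p_def field_simps)
  define r where "r = (1 - p)^2"
  have r01: "0 \<le> r" "r \<le> 1" using p01 by (auto simp: r_def power_le_one)
  define G where "G = (1 - r) / (1 - r * z)"
  have rz: "r * z \<le> z" using r01 z01 by (simp add: mult_left_le_one_le)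
  have step1: "measure_pmf.prob P {D. \<not> pebblable E D v} \<le> measure_pmf.prob P {D. S D \<le> L}"
    by (rule measure_pmf.finite_measure_mono[OF key]) simp
  have zS: "z ^ (S D) \<le> 1" for D using z01 by (simp add: power_le_one)
  have int1: "integrable (measure_pmf P) (\<lambda>D. z ^ (S D) / z ^ L)"
  proof (rule measure_pmf.integrable_const_bound[where B="1 / z ^ L"])
    show "AE x in measure_pmf P. norm (z ^ S x / z ^ L) \<le> 1 / z ^ L"
      using zS z01 by (auto intro!: divide_right_mono)
  qed simp
  have step2: "measure_pmf.prob P {D. S D \<le> L} \<le> measure_pmf.expectation P (\<lambda>D. z ^ (S D) / z ^ L)"
  proof -
    have "measure_pmf.prob P {D. S D \<le> L} = measure_pmf.expectation P (indicator {D. S D \<le> L})"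
      by simp
    also have "\<dots> \<le> measure_pmf.expectation P (\<lambda>D. z ^ (S D) / z ^ L)"
    proof (rule integral_mono'[OF int1])
      fix D
      show "0 \<le> z ^ S D / z ^ L" using z01 by simp
      show "indicator {D. S D \<le> L} D \<le> z ^ S D / z ^ L"
      proof (cases "S D \<le> L")
        case True
        then have "z ^ L \<le> z ^ S D" using z01 by (intro power_decreasing) auto
        then show ?thesis using True z01 by simp
      next
        case False
        then show ?thesis using z01 by simp
      qed
    qed
    finally show ?thesis .
  qed
  define f where "f x n = (if x \<in> C then z ^ (n div 2) else 1)" for x n
  have prodf: "z ^ (S D) = (\<Prod>x\<in>V. f x (D x))" for D
  proof -
    have "z ^ (S D) = (\<Prod>c\<in>C. z ^ (D c div 2))" by (simp add: S_def power_sum)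
    also have "\<dots> = (\<Prod>c\<in>V \<inter> C. z ^ (D c div 2))" using CV by (simp add: Int_absorb1)
    also have "\<dots> = (\<Prod>x\<in>V. f x (D x))" by (simp add: prod.inter_restrict[OF fin] f_def)
    finally show ?thesis .
  qed
  have step3: "measure_pmf.expectation P (\<lambda>D. z ^ (S D)) = G ^ k"
  proof -
    have "measure_pmf.expectation P (\<lambda>D. z ^ (S D)) = measure_pmf.expectation P (\<lambda>D. \<Prod>x\<in>V. f x (D x))"
      by (simp add: prodf)
    also have "\<dots> = (\<Prod>x\<in>V. measure_pmf.expectation (geometric_pmf p) (\<lambda>n. f x n))"
      unfolding P_def
    proof (rule expectation_prod_Pi_pmf[OF fin])
      fix x
      show "integrable (measure_pmf (geometric_pmf p)) (f x)"
      proof (rule measure_pmf.integrable_const_bound[where B=1])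
        show "AE n in measure_pmf (geometric_pmf p). norm (f x n) \<le> 1"
          using z01 by (auto simp: f_def power_le_one)
      qed simp
      fix n show "0 \<le> f x n" using z01 by (simp add: f_def)
    qed
    also have "\<dots> = (\<Prod>x\<in>V. if x \<in> C then G else 1)"
    proof (rule prod.cong)
      fix x
      show "measure_pmf.expectation (geometric_pmf p) (f x) = (if x \<in> C then G else 1)"
      proof (cases "x \<in> C")
        case True
        then have "f x = (\<lambda>n. z ^ (n div 2))" by (simp add: f_def fun_eq_iff)
        then show ?thesis using geom_div2[OF p01, of z] z01 True by (simp add: G_def r_def)
      next
        case False
        then have "f x = (\<lambda>n. 1)" by (simp add: f_def fun_eq_iff)
        then show ?thesis using False by simp
      qed
    qed simp
    also have "\<dots> = G ^ card (V \<inter> C)" by (simp add: prod.inter_restrict[OF fin, symmetric])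
    also have "V \<inter> C = C" using CV by auto
    finally show ?thesis using cardC by simp
  qed
  have bound: "measure_pmf.prob P {D. \<not> pebblable E D v} \<le> G ^ k / z ^ L"
    using step1 step2 step3 by simp
  have Lr2: "Lr = 2 ^ (d - 1) - 1"
  proof -
    have "(1::nat) \<le> 2 ^ (d - 1)" by simp
    then show ?thesis by (simp add: Lr_def L_def of_nat_diff)
  qed
  have cval: "1 - r = 1 / (1 + Phi \<alpha>)"
  proof -
    have a1: "1 + \<alpha> > 0" "2 * \<alpha> + 1 > 0" using apos by auto
    have h1: "1 - p = \<alpha> / (1 + \<alpha>)" using a1 by (simp add: p_def field_simps)
    have h2: "1 - r = (2 * \<alpha> + 1) / (1 + \<alpha>)^2"
    proof -
      have a2: "(1 + \<alpha>)^2 > 0" using a1 by simp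
      have "r = \<alpha>^2 / (1 + \<alpha>)^2" by (simp add: r_def h1 power_divide)
      then have "1 - r = ((1 + \<alpha>)^2 - \<alpha>^2) / (1 + \<alpha>)^2" using a2 by (simp add: diff_divide_distrib)
      moreover have "(1 + \<alpha>)^2 - \<alpha>^2 = 2 * \<alpha> + 1" by (simp add: power2_eq_square algebra_simps)
      ultimately show ?thesis by simp
    qed
    have h3: "1 + Phi \<alpha> = (1 + \<alpha>)^2 / (2 * \<alpha> + 1)"
      using a1 by (simp add: Phi_def field_simps power2_eq_square)
    show ?thesis using a1 by (simp add: h2 h3)
  qed
  have Phipos: "Phi \<alpha> \<ge> 0" using apos by (simp add: Phi_def)
  have cpos: "1 - r > 0" using cval Phipos by simp
  have Gle: "G \<le> (1 - r) * ((Lr + K) / K)"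
  proof -
    have "1 - z = K / (Lr + K)" using Lrpos Kpos by (simp add: z_def field_simps)
    then have "K / (Lr + K) \<le> 1 - r * z" using rz by simp
    moreover have "0 < K / (Lr + K)" using Lrpos Kpos by simp
    ultimately have le: "K / (Lr + K) \<le> 1 - r * z" and p1: "0 < 1 - r * z" and p2: "0 < K / (Lr + K)"
      by linarith+
    have pp: "0 < (1 - r * z) * (K / (Lr + K))" by (rule mult_pos_pos[OF p1 p2])
    have "(1 - r) / (1 - r * z) \<le> (1 - r) / (K / (Lr + K))"
      by (rule divide_left_mono[OF le _ pp]) (use cpos in simp)
    then show ?thesis by (simp add: G_def)
  qed
  have rz1: "0 < 1 - r * z" using rz z01 by linarith
  have G0: "G \<ge> 0" unfolding G_def using cpos rz1 by (intro divide_nonneg_pos) auto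
  have Gk: "G ^ k \<le> ((1 - r) * ((Lr + K) / K)) ^ k" using Gle G0 by (intro power_mono) auto
  have zL: "1 / z ^ L \<le> exp 1 ^ k"
  proof -
    have "1 / z ^ L = (1 + K / Lr) ^ L" using Lrpos Kpos
      by (simp add: z_def power_divide field_simps)
    also have "\<dots> \<le> exp (K / Lr) ^ L" using Lrpos Kpos by (intro power_mono) auto
    also have "\<dots> = exp (real L * (K / Lr))" by (rule exp_of_nat_mult[symmetric])
    also have "\<dots> = exp (real k)" using Lrpos by (simp add: Lr_def K_def)
    also have "\<dots> = exp 1 ^ k" using exp_of_nat_mult[of k 1] by simp
    finally show ?thesis .
  qed
  have "G ^ k / z ^ L = G ^ k * (1 / z ^ L)" by simp
  also have "\<dots> \<le> ((1 - r) * ((Lr + K) / K)) ^ k * exp 1 ^ k"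
    using Gk zL G0 cpos Lrpos Kpos z01 by (intro mult_mono) auto
  also have "\<dots> = (exp 1 * (2 ^ (d - 1) + real k - 1) / (real k * (1 + Phi \<alpha>))) ^ k"
    by (simp add: power_mult_distrib[symmetric] cval Lr2 K_def field_simps)
  finally have "G ^ k / z ^ L \<le> (exp 1 * (2 ^ (d - 1) + real k - 1) / (real k * (1 + Phi \<alpha>))) ^ k" .
  then show ?thesis using bound unfolding Let_def n_def[symmetric] y_def[symmetric] k_def[symmetric] P_def p_def
    by simp
qed

end
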